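(* Let $\mathcal{T}$ be a compact interval, $\boldsymbol{\phi}=(\phi_1,\dots,\phi_m)'$ linearly independent functions in $L^2(\mathcal{T})$, and $X(t)=\mathbf{a}'\boldsymbol{\phi}(t)$ a rank $m\in\mathbb{N}$ univariate stochastic process with random coefficient vector $\mathbf{a}\in\mathbb{R}^m$, mean $\mu$ and positive definite covariance kernel $\kappa$. Then: (i) $\mathbf{a}$ has a multivariate distribution with mean $\mathbf{m}_{\mathbf{a}}$ and covariance $\mathrm{Cov}(\mathbf{a})=\boldsymbol{\Sigma}$, symmetric positive definite, such that $\mathbf{m}_{\mathbf{a}}'\boldsymbol{\phi}(t)=\mu(t)$ and $\boldsymbol{\phi}'(s)\boldsymbol{\Sigma}\boldsymbol{\phi}(t)=\kappa(s,t)$ for all $s,t\in\mathcal{T}$; (ii) $\mathrm{fmd}^2(X;m)=(\mathbf{a}-\mathbf{m}_{\mathbf{a}})'\boldsymbol{\Sigma}^{-1}(\mathbf{a}-\mathbf{m}_{\mathbf{a}})$, the squared Mahalanobis distance of $\mathbf{a}$; (iii) if $X$ is a Gaussian process, then $\mathbf{a}\sim\mathcal{N}(\mathbf{m}_{\mathbf{a}},\boldsymbol{\Sigma})$.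
   Context: Rank $m$ means the covariance operator of $X$ has at most $m$ nonzero eigenvalues. $\mathrm{fmd}^2(X;m)=\sum_{i=1}^m\lambda_i^{-1}\langle X-\mu,\xi_i\rangle^2$, where $(\lambda_i,\xi_i)$ are the $m$ largest eigenpairs of the integral operator with kernel $\kappa$ and $\langle f,g\rangle=\int_{\mathcal{T}}fg$. A Gaussian process is one all of whose finite-dimensional marginals are jointly normal. *)

theory Defs
  imports "HOL-Probability.Probability"
begin

definition L2 :: "real set \<Rightarrow> (real \<Rightarrow> real) \<Rightarrow> bool" where
  "L2 T f \<longleftrightarrow> set_borel_measurable lborel T f \<and> set_integrable lborel T (\<lambda>t. (f t)\<^sup>2)"

definition ipL2 :: "real set \<Rightarrow> (real \<Rightarrow> real) \<Rightarrow> (real \<Rightarrow> real) \<Rightarrow> real" where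
  "ipL2 T f g = (LINT t:T|lborel. f t * g t)"

definition L2_lin_indep :: "real set \<Rightarrow> ('m::finite \<Rightarrow> real \<Rightarrow> real) \<Rightarrow> bool" where
  "L2_lin_indep T \<phi> \<longleftrightarrow>
     (\<forall>c :: 'm \<Rightarrow> real. (AE t in lborel. t \<in> T \<longrightarrow> (\<Sum>i\<in>UNIV. c i * \<phi> i t) = 0) \<longrightarrow> c = (\<lambda>_. 0))"

definition int_op :: "real set \<Rightarrow> (real \<Rightarrow> real \<Rightarrow> real) \<Rightarrow> (real \<Rightarrow> real) \<Rightarrow> real \<Rightarrow> real" where
  "int_op T k f = (\<lambda>s. LINT t:T|lborel. k s t * f t)"

definition is_eigenpair :: "real set \<Rightarrow> (real \<Rightarrow> real \<Rightarrow> real) \<Rightarrow> real \<Rightarrow> (real \<Rightarrow> real) \<Rightarrow> bool" where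
  "is_eigenpair T k l f \<longleftrightarrow> L2 T f \<and> \<not> (AE t in lborel. t \<in> T \<longrightarrow> f t = 0) \<and>
     (AE s in lborel. s \<in> T \<longrightarrow> int_op T k f s = l * f s)"

text \<open>(lam i, xi i), i ranging over the m-element type 'm, are the m largest eigenpairs:
  orthonormal eigenfunctions, and every eigenpair whose eigenfunction is orthogonal to all of
  them has eigenvalue no larger than any of the lam i.\<close>
definition top_eigenpairs :: "real set \<Rightarrow> (real \<Rightarrow> real \<Rightarrow> real) \<Rightarrow> ('m::finite \<Rightarrow> real) \<Rightarrow> ('m \<Rightarrow> real \<Rightarrow> real) \<Rightarrow> bool" where
  "top_eigenpairs T k lam xi \<longleftrightarrow>
     (\<forall>i. is_eigenpair T k (lam i) (xi i)) \<and>
     (\<forall>i j. ipL2 T (xi i) (xi j) = (if i = j then 1 else 0)) \<and>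
     (\<forall>l g. is_eigenpair T k l g \<and> (\<forall>i. ipL2 T g (xi i) = 0) \<longrightarrow> (\<forall>i. l \<le> lam i))"

definition fmd2 :: "real set \<Rightarrow> (real \<Rightarrow> real) \<Rightarrow> ('m::finite \<Rightarrow> real) \<Rightarrow> ('m \<Rightarrow> real \<Rightarrow> real) \<Rightarrow> (real \<Rightarrow> real) \<Rightarrow> real" where
  "fmd2 T \<mu> lam xi x = (\<Sum>i\<in>UNIV. inverse (lam i) * (ipL2 T (\<lambda>t. x t - \<mu> t) (xi i))\<^sup>2)"

definition normal_rv :: "'w measure \<Rightarrow> ('w \<Rightarrow> real) \<Rightarrow> real \<Rightarrow> real \<Rightarrow> bool" where
  "normal_rv M Y mu v \<longleftrightarrow>
     (v = 0 \<and> Y \<in> borel_measurable M \<and> (AE w in M. Y w = mu)) \<or>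
     (v > 0 \<and> distributed M lborel Y (normal_density mu (sqrt v)))"

definition mv_normal :: "'w measure \<Rightarrow> ('w \<Rightarrow> real^'m) \<Rightarrow> real^'m \<Rightarrow> real^'m^'m \<Rightarrow> bool" where
  "mv_normal M Y mu S \<longleftrightarrow>
     (\<forall>c :: real^'m. normal_rv M (\<lambda>w. c \<bullet> Y w) (c \<bullet> mu) (c \<bullet> (S *v c)))"

text \<open>Gaussian process on T: all finite-dimensional marginals are jointly normal, i.e. every
  finite linear combination of values X(t), t in T, is (possibly degenerate) normal.\<close>
definition gaussian_process :: "'w measure \<Rightarrow> real set \<Rightarrow> ('w \<Rightarrow> real \<Rightarrow> real) \<Rightarrow> bool" where
  "gaussian_process M T X \<longleftrightarrow>
     (\<forall>S c. finite S \<and> S \<subseteq> T \<longrightarrow> (\<exists>mu v. normal_rv M (\<lambda>w. \<Sum>t\<in>S. c t * X w t) mu v))"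

end

theory Submission
  imports Defs
begin

definition sqi :: "'a measure \<Rightarrow> ('a \<Rightarrow> real) \<Rightarrow> bool" where
  "sqi M f \<longleftrightarrow> f \<in> borel_measurable M \<and> integrable M (\<lambda>x. (f x)\<^sup>2)"

lemma sqi_mult:
  assumes "sqi M f" "sqi M g" shows "integrable M (\<lambda>x. f x * g x)"
proof (rule Bochner_Integration.integrable_bound)
  show "integrable M (\<lambda>x. (f x)\<^sup>2 + (g x)\<^sup>2)" using assms unfolding sqi_def by auto
  show "(\<lambda>x. f x * g x) \<in> borel_measurable M" using assms unfolding sqi_def by auto
  show "AE x in M. norm (f x * g x) \<le> norm ((f x)\<^sup>2 + (g x)\<^sup>2)"
  proof (rule AE_I2)
    fix x
    have "0 \<le> (\<bar>f x\<bar> - \<bar>g x\<bar>)\<^sup>2" by simp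
    then have "2 * \<bar>f x\<bar> * \<bar>g x\<bar> \<le> (f x)\<^sup>2 + (g x)\<^sup>2"
      by (simp add: power2_eq_square algebra_simps)
    moreover have "0 \<le> \<bar>f x\<bar> * \<bar>g x\<bar>" by simp
    ultimately have "\<bar>f x\<bar> * \<bar>g x\<bar> \<le> (f x)\<^sup>2 + (g x)\<^sup>2" by linarith
    then show "norm (f x * g x) \<le> norm ((f x)\<^sup>2 + (g x)\<^sup>2)"
      by (simp add: abs_mult)
  qed
qed

lemma sqi_add: assumes "sqi M f" "sqi M g" shows "sqi M (\<lambda>x. f x + g x)"
proof -
  have "integrable M (\<lambda>x. (f x)\<^sup>2 + 2 * (f x * g x) + (g x)\<^sup>2)"
    using sqi_mult[OF assms] assms unfolding sqi_def by auto
  moreover have "(\<lambda>x. (f x + g x)\<^sup>2) = (\<lambda>x. (f x)\<^sup>2 + 2 * (f x * g x) + (g x)\<^sup>2)"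
    by (simp add: power2_eq_square algebra_simps)
  ultimately show ?thesis using assms unfolding sqi_def by auto
qed

lemma sqi_cmult: assumes "sqi M f" shows "sqi M (\<lambda>x. c * f x)"
proof -
  have "(\<lambda>x. (c * f x)\<^sup>2) = (\<lambda>x. c\<^sup>2 * (f x)\<^sup>2)" by (simp add: power_mult_distrib)
  then show ?thesis using assms unfolding sqi_def by auto
qed

lemma sqi_zero: "sqi M (\<lambda>x. 0)" unfolding sqi_def by auto

lemma sqi_sum: assumes "finite S" "\<And>i. i \<in> S \<Longrightarrow> sqi M (f i)"
  shows "sqi M (\<lambda>x. \<Sum>i\<in>S. f i x)"
  using assms
proof (induction S rule: finite_induct)
  case empty then show ?case using sqi_zero by simp
next
  case (insert i S)
  then show ?case using sqi_add[of M "f i" "\<lambda>x. \<Sum>i\<in>S. f i x"] by simp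
qed

lemma sqi_const: assumes "finite_measure M" shows "sqi M (\<lambda>x. c)"
proof -
  interpret finite_measure M by fact
  show ?thesis unfolding sqi_def by auto
qed

lemma sqi_integrable: assumes "finite_measure M" "sqi M f" shows "integrable M f"
  using sqi_mult[OF assms(2) sqi_const[OF assms(1), of 1]] by simp

lemma sym_dot: fixes A :: "real^'n^'n"
  assumes "transpose A = A" shows "x \<bullet> (A *v y) = (A *v x) \<bullet> y"
proof -
  have "x \<bullet> (A *v y) = (x v* A) \<bullet> y" by (simp add: dot_lmul_matrix)
  also have "x v* A = transpose A *v x" by (simp add: transpose_matrix_vector)
  finally show ?thesis using assms by simp
qed

lemma quad_aux: fixes n K :: real
  assumes "\<forall>t. 2 * t * n + t\<^sup>2 * K \<le> 0" shows "n \<le> 0"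
proof (rule ccontr)
  assume "\<not> n \<le> 0" then have n: "n > 0" by simp
  define t where "t = n / (\<bar>K\<bar> + 1)"
  have t: "t > 0" using n by (simp add: t_def)
  have "t * (\<bar>K\<bar> + 1) = n" by (simp add: t_def)
  have "t\<^sup>2 * K \<ge> - (t\<^sup>2 * (\<bar>K\<bar> + 1))"
  proof -
    have "- \<bar>K\<bar> \<le> K" by simp
    then have "t\<^sup>2 * (- \<bar>K\<bar>) \<le> t\<^sup>2 * K" by (rule mult_left_mono) simp
    then have "t\<^sup>2 * K \<ge> - (t\<^sup>2 * \<bar>K\<bar>)" by simp
    moreover have "t\<^sup>2 * \<bar>K\<bar> \<le> t\<^sup>2 * (\<bar>K\<bar> + 1)" by (simp add: mult_left_mono)
    ultimately show ?thesis by linarith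
  qed
  also have "t\<^sup>2 * (\<bar>K\<bar> + 1) = t * n" using \<open>t * (\<bar>K\<bar> + 1) = n\<close>
    by (metis mult.assoc power2_eq_square)
  finally have "2 * t * n + t\<^sup>2 * K \<ge> t * n" by linarith
  moreover have "t * n > 0" using t n by simp
  ultimately show False using assms[rule_format, of t] by linarith
qed

lemma eig_exists:
  fixes G H A :: "real^'m^'m" and V :: "(real^'m) set"
  assumes Gs: "transpose G = G" and Hs: "transpose H = H"
    and Gpd: "\<forall>x. x \<noteq> 0 \<longrightarrow> x \<bullet> (G *v x) > 0"
    and GA: "G ** A = H" and V: "subspace V" and Vne: "\<exists>c\<in>V. c \<noteq> 0"
    and inv: "\<forall>c\<in>V. A *v c \<in> V"
  shows "\<exists>c\<in>V. c \<noteq> 0 \<and> (\<exists>l. A *v c = l *\<^sub>R c)"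
proof -
  define K where "K = sphere (0::real^'m) 1 \<inter> V"
  define R where "R = (\<lambda>c::real^'m. (c \<bullet> (H *v c)) / (c \<bullet> (G *v c)))"
  have cK: "compact K" unfolding K_def
    by (intro compact_Int_closed compact_sphere closed_subspace V)
  obtain c0 where c0: "c0 \<in> V" "c0 \<noteq> 0" using Vne by auto
  have "c0 /\<^sub>R norm c0 \<in> K" unfolding K_def using c0 V
    by (simp add: subspace_scale)
  then have Kne: "K \<noteq> {}" by auto
  have "continuous_on K R" unfolding R_def
  proof (intro continuous_on_divide continuous_on_inner continuous_on_id
      matrix_vector_mult_linear_continuous_on[THEN continuous_on_compose2])
    show "\<forall>x\<in>K. x \<bullet> (G *v x) \<noteq> 0"
    proof
      fix x assume "x \<in> K"
      then have "x \<noteq> 0" by (auto simp: K_def)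
      then show "x \<bullet> (G *v x) \<noteq> 0" using Gpd by (metis less_irrefl)
    qed
  qed auto
  then obtain c where cK': "c \<in> K" and cmax: "\<forall>y\<in>K. R y \<le> R c"
    using continuous_attains_sup[OF cK Kne] by auto
  have cV: "c \<in> V" and cnz: "c \<noteq> 0" using cK' unfolding K_def by auto
  define l where "l = R c"
  define n where "n = (\<lambda>u::real^'m. u \<bullet> (G *v u))"
  define q where "q = (\<lambda>u::real^'m. u \<bullet> (H *v u))"
  have npos: "n u > 0" if "u \<noteq> 0" for u using Gpd that unfolding n_def by auto
  have bound: "q u \<le> l * n u" if "u \<in> V" for u
  proof (cases "u = 0")
    case True then show ?thesis by (simp add: q_def n_def)
  next
    case False
    define k where "k = 1 / norm u"
    have k: "k \<noteq> 0" using False by (simp add: k_def)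
    have "k *\<^sub>R u \<in> K" unfolding K_def k_def using that V False
      by (simp add: subspace_scale)
    then have "R (k *\<^sub>R u) \<le> l" using cmax l_def by auto
    moreover have "R (k *\<^sub>R u) = R u" unfolding R_def
      using k by (simp add: matrix_vector_mult_scaleR)
    ultimately have "q u / n u \<le> l" unfolding R_def q_def n_def by simp
    then show ?thesis using npos[OF False] by (simp add: divide_le_eq mult.commute)
  qed
  have qc: "q c = l * n c" using npos[OF cnz] unfolding l_def R_def q_def n_def by simp
  define w where "w = A *v c - l *\<^sub>R c"
  have wV: "w \<in> V" unfolding w_def using inv cV V
    by (simp add: subspace_diff subspace_scale)
  have key: "c \<bullet> (H *v w) = n w + l * (c \<bullet> (G *v w))"
  proof -
    have "c \<bullet> (H *v w) = (H *v c) \<bullet> w" using sym_dot[OF Hs] by simp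
    also have "H *v c = G *v (A *v c)" using GA by (simp add: matrix_vector_mul_assoc)
    also have "(G *v (A *v c)) \<bullet> w = (A *v c) \<bullet> (G *v w)" using sym_dot[OF Gs] by simp
    also have "A *v c = w + l *\<^sub>R c" by (simp add: w_def)
    finally show ?thesis by (simp add: n_def inner_add_left)
  qed
  have symH: "w \<bullet> (H *v c) = c \<bullet> (H *v w)" using sym_dot[OF Hs] by (simp add: inner_commute)
  have symG: "w \<bullet> (G *v c) = c \<bullet> (G *v w)" using sym_dot[OF Gs] by (simp add: inner_commute)
  have "\<forall>t. 2 * t * n w + t\<^sup>2 * (q w - l * n w) \<le> 0"
  proof
    fix t :: real
    have "c + t *\<^sub>R w \<in> V" using cV wV V by (simp add: subspace_add subspace_scale)
    then have b: "q (c + t *\<^sub>R w) \<le> l * n (c + t *\<^sub>R w)" by (rule bound)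
    have eq1: "q (c + t *\<^sub>R w) = q c + 2 * t * (c \<bullet> (H *v w)) + t\<^sup>2 * q w"
      unfolding q_def using symH
      by (simp add: matrix_vector_right_distrib matrix_vector_mult_scaleR inner_add_left
          inner_add_right power2_eq_square algebra_simps)
    have eq2: "n (c + t *\<^sub>R w) = n c + 2 * t * (c \<bullet> (G *v w)) + t\<^sup>2 * n w"
      unfolding n_def using symG
      by (simp add: matrix_vector_right_distrib matrix_vector_mult_scaleR inner_add_left
          inner_add_right power2_eq_square algebra_simps)
    show "2 * t * n w + t\<^sup>2 * (q w - l * n w) \<le> 0"
      using b unfolding eq1 eq2 key qc by (simp add: algebra_simps)
  qed
  then have "n w \<le> 0" by (rule quad_aux)
  then have "w = 0" using npos by force
  then have "A *v c = l *\<^sub>R c" by (simp add: w_def)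
  then show ?thesis using cV cnz by auto
qed

locale cor3 = prob_space M for M :: "'w measure" +
  fixes lo hi :: real
    and \<phi> :: "'m::finite \<Rightarrow> real \<Rightarrow> real"
    and a :: "'w \<Rightarrow> real^'m"
    and X :: "'w \<Rightarrow> real \<Rightarrow> real"
    and \<mu> :: "real \<Rightarrow> real" and \<kappa> :: "real \<Rightarrow> real \<Rightarrow> real"
  assumes lohi: "lo < hi"
    and phi_L2: "\<forall>i. L2 {lo..hi} (\<phi> i)"
    and phi_indep: "L2_lin_indep {lo..hi} \<phi>"
    and a_meas: "a \<in> borel_measurable M"
    and X_def: "\<forall>w t. X w t = (\<Sum>i\<in>UNIV. a w $ i * \<phi> i t)"
    and X_sq: "\<forall>t\<in>{lo..hi}. integrable M (\<lambda>w. (X w t)\<^sup>2)"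
    and mean: "\<forall>t\<in>{lo..hi}. \<mu> t = (\<integral>w. X w t \<partial>M)"
    and cov: "\<forall>s\<in>{lo..hi}. \<forall>t\<in>{lo..hi}.
                \<kappa> s t = (\<integral>w. (X w s - \<mu> s) * (X w t - \<mu> t) \<partial>M)"
    and kappa_pd: "\<forall>c :: 'm \<Rightarrow> real. c \<noteq> (\<lambda>_. 0) \<longrightarrow>
                ipL2 {lo..hi} (\<lambda>s. \<Sum>i\<in>UNIV. c i * \<phi> i s)
                  (int_op {lo..hi} \<kappa> (\<lambda>t. \<Sum>i\<in>UNIV. c i * \<phi> i t)) > 0"
begin

definition phiv :: "real \<Rightarrow> real^'m" where "phiv t = (\<chi> i. \<phi> i t)"

lemma X_eq: "X w t = a w \<bullet> phiv t"
  using X_def by (simp add: inner_vec_def phiv_def)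

lemma X_eq2: "X w t = phiv t \<bullet> a w"
  unfolding X_eq by (rule inner_commute)

lemma lin_phiv: "v \<bullet> phiv t = (\<Sum>i\<in>UNIV. v $ i * \<phi> i t)"
  by (simp add: inner_vec_def phiv_def)

lemma lin_meas: "(\<lambda>w. v \<bullet> a w) \<in> borel_measurable M"
  using a_meas by (intro borel_measurable_inner) auto

lemma X_meas: "(\<lambda>w. X w t) \<in> borel_measurable M"
  unfolding X_eq using a_meas by (intro borel_measurable_inner) auto

lemma sqi_X: "t \<in> {lo..hi} \<Longrightarrow> sqi M (\<lambda>w. X w t)"
  using X_sq X_meas unfolding sqi_def by auto

lemma span_full: "span (phiv ` {lo..hi}) = UNIV"
proof (rule ccontr)
  assume "span (phiv ` {lo..hi}) \<noteq> UNIV"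
  then obtain c where c: "c \<noteq> 0" "\<forall>x\<in>span (phiv ` {lo..hi}). c \<bullet> x = 0"
    using span_not_UNIV_orthogonal by blast
  have "\<forall>t\<in>{lo..hi}. c \<bullet> phiv t = 0"
    using c(2) span_base by blast
  then have "\<forall>t\<in>{lo..hi}. (\<Sum>i\<in>UNIV. c $ i * \<phi> i t) = 0"
    by (simp add: lin_phiv)
  then have "AE t in lborel. t \<in> {lo..hi} \<longrightarrow> (\<Sum>i\<in>UNIV. (\<lambda>i. c $ i) i * \<phi> i t) = 0"
    by auto
  then have "(\<lambda>i. c $ i) = (\<lambda>_. 0)" using phi_indep unfolding L2_lin_indep_def by blast
  then have "c = 0" by (metis vec_eq_iff zero_index)
  then show False using c by simp
qed

lemma repr: "\<exists>U u. finite U \<and> U \<subseteq> {lo..hi} \<and> (\<forall>w. v \<bullet> a w = (\<Sum>t\<in>U. u t * X w t))"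
proof -
  have "v \<in> span (phiv ` {lo..hi})" using span_full by simp
  then obtain S r where S: "finite S" "S \<subseteq> phiv ` {lo..hi}" "v = (\<Sum>x\<in>S. r x *\<^sub>R x)"
    unfolding span_explicit by blast
  then obtain U where U: "U \<subseteq> {lo..hi}" "inj_on phiv U" "S = phiv ` U"
    using S(2) unfolding subset_image_inj by blast
  have fU: "finite U" using S(1) U(3) finite_image_iff[OF U(2)] by simp
  have v: "v = (\<Sum>t\<in>U. r (phiv t) *\<^sub>R phiv t)" using S(3) U by (simp add: sum.reindex)
  have "\<forall>w. v \<bullet> a w = (\<Sum>t\<in>U. r (phiv t) * (phiv t \<bullet> a w))"
    unfolding v by (simp add: inner_sum_left)
  then have "\<forall>w. v \<bullet> a w = (\<Sum>t\<in>U. r (phiv t) * X w t)"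
    unfolding X_eq2 .
  then show ?thesis using fU U(1) by (intro exI[of _ U] exI[of _ "\<lambda>t. r (phiv t)"]) simp
qed

lemma sqi_lin: "sqi M (\<lambda>w. v \<bullet> a w)"
proof -
  from repr[of v] obtain U u where U: "finite U" "U \<subseteq> {lo..hi}"
    and U3: "\<forall>w. v \<bullet> a w = (\<Sum>t\<in>U. u t * X w t)"
    by blast
  have e: "(\<lambda>w. v \<bullet> a w) = (\<lambda>w. \<Sum>t\<in>U. u t * X w t)"
    by (rule ext) (rule U3[rule_format])
  have "sqi M (\<lambda>w. \<Sum>t\<in>U. u t * X w t)"
    by (rule sqi_sum[OF U(1)], rule sqi_cmult, rule sqi_X) (use U(2) in auto)
  then show ?thesis unfolding e .
qed

definition ma :: "real^'m" where "ma = (\<chi> i. \<integral>w. a w $ i \<partial>M)"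

definition Sig :: "real^'m^'m" where
  "Sig = (\<chi> i j. \<integral>w. (a w $ i - ma $ i) * (a w $ j - ma $ j) \<partial>M)"

lemma sqi_comp: "sqi M (\<lambda>w. a w $ i)"
  using sqi_lin[of "axis i 1"] by (simp add: cart_eq_inner_axis inner_commute)

lemma sqi_D: "sqi M (\<lambda>w. a w $ i - ma $ i)"
proof -
  have "sqi M (\<lambda>w. a w $ i + (- ma $ i))"
    by (rule sqi_add[OF sqi_comp sqi_const[OF finite_measure_axioms]])
  then show ?thesis by simp
qed

lemma int_comp: "integrable M (\<lambda>w. a w $ i)"
  using sqi_integrable[OF finite_measure_axioms sqi_comp] .


lemma D_lin: "v \<bullet> (a w - ma) = (\<Sum>i\<in>UNIV. v $ i * (a w $ i - ma $ i))"
  unfolding inner_vec_def by simp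


lemma exp_lin: "(\<integral>w. v \<bullet> a w \<partial>M) = v \<bullet> ma"
proof -
  have e: "(\<lambda>w. v \<bullet> a w) = (\<lambda>w. \<Sum>i\<in>UNIV. v $ i * a w $ i)"
    unfolding inner_vec_def inner_real_def by simp
  have "(\<integral>w. (\<Sum>i\<in>UNIV. v $ i * a w $ i) \<partial>M) = (\<Sum>i\<in>UNIV. (\<integral>w. v $ i * a w $ i \<partial>M))"
    by (rule Bochner_Integration.integral_sum) (rule integrable_mult_right[OF int_comp])
  also have "\<dots> = (\<Sum>i\<in>UNIV. v $ i * ma $ i)"
    by (simp add: ma_def)
  finally show ?thesis unfolding e inner_vec_def inner_real_def .
qed


lemma exp_bilin: "(\<integral>w. (u \<bullet> (a w - ma)) * (v \<bullet> (a w - ma)) \<partial>M) = u \<bullet> (Sig *v v)"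
proof -
  define D where "D = (\<lambda>i w. a w $ i - ma $ i)"
  have e: "(\<lambda>w. (u \<bullet> (a w - ma)) * (v \<bullet> (a w - ma))) =
     (\<lambda>w. \<Sum>i\<in>UNIV. \<Sum>j\<in>UNIV. u $ i * v $ j * (D i w * D j w))"
    unfolding D_lin sum_product D_def by (rule ext, intro sum.cong refl) (simp add: ac_simps)
  have ij: "integrable M (\<lambda>w. u $ i * v $ j * (D i w * D j w))" for i j
    unfolding D_def by (rule integrable_mult_right[OF sqi_mult[OF sqi_D sqi_D]])
  have "(\<integral>w. (\<Sum>i\<in>UNIV. \<Sum>j\<in>UNIV. u $ i * v $ j * (D i w * D j w)) \<partial>M) =
     (\<Sum>i\<in>UNIV. (\<integral>w. (\<Sum>j\<in>UNIV. u $ i * v $ j * (D i w * D j w)) \<partial>M))"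
    by (rule Bochner_Integration.integral_sum) (rule Bochner_Integration.integrable_sum[OF ij])
  also have "\<dots> = (\<Sum>i\<in>UNIV. \<Sum>j\<in>UNIV. (\<integral>w. u $ i * v $ j * (D i w * D j w) \<partial>M))"
    by (rule sum.cong[OF refl], rule Bochner_Integration.integral_sum) (rule ij)
  also have "\<dots> = (\<Sum>i\<in>UNIV. \<Sum>j\<in>UNIV. u $ i * v $ j * Sig $ i $ j)"
    by (simp add: Sig_def D_def)
  also have "\<dots> = u \<bullet> (Sig *v v)"
    unfolding inner_vec_def inner_real_def matrix_vector_mult_def
    by (simp add: sum_distrib_left ac_simps)
  finally show ?thesis unfolding e .
qed

lemma Sig_sym: "transpose Sig = Sig"
  unfolding transpose_def Sig_def by (simp add: vec_eq_iff mult.commute)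

lemma Sig_psd: "0 \<le> v \<bullet> (Sig *v v)"
  using exp_bilin[of v v, symmetric] by simp

lemma mean_eq: "t \<in> {lo..hi} \<Longrightarrow> ma \<bullet> phiv t = \<mu> t"
  using mean exp_lin[of "phiv t"] by (simp add: X_eq inner_commute)

lemma cov_eq: assumes "s \<in> {lo..hi}" "t \<in> {lo..hi}" shows "phiv s \<bullet> (Sig *v phiv t) = \<kappa> s t"
proof -
  have "\<And>w r. r \<in> {lo..hi} \<Longrightarrow> X w r - \<mu> r = phiv r \<bullet> (a w - ma)"
    using mean_eq by (simp add: X_eq inner_commute inner_diff_right)
  then show ?thesis using cov assms exp_bilin[of "phiv s" "phiv t"] by simp
qed

end

lemma L2_sqi: "L2 T f \<longleftrightarrow> sqi lborel (\<lambda>t. indicator T t * f t)"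
proof -
  have e: "(\<lambda>t. (indicator T t * f t)\<^sup>2) = (\<lambda>t. indicator T t * (f t)\<^sup>2)"
    by (auto simp: indicator_def power2_eq_square)
  show ?thesis unfolding L2_def sqi_def set_borel_measurable_def set_integrable_def real_scaleR_def e
    by (rule refl)
qed
lemma L2_prod: assumes "L2 T f" "L2 T g" shows "set_integrable lborel T (\<lambda>t. f t * g t)"
proof -
  have e: "(\<lambda>t. indicator T t *\<^sub>R (f t * g t)) = (\<lambda>t. (indicator T t * f t) * (indicator T t * g t))"
    by (auto simp: indicator_def)
  have "sqi lborel (\<lambda>t. indicator T t * f t)" "sqi lborel (\<lambda>t. indicator T t * g t)"
    using assms unfolding L2_sqi by auto
  then have "integrable lborel (\<lambda>t. (indicator T t * f t) * (indicator T t * g t))"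
    by (rule sqi_mult)
  then show ?thesis unfolding set_integrable_def e .
qed

lemma L2_lin: fixes \<phi> :: "'m::finite \<Rightarrow> real \<Rightarrow> real"
  assumes "\<forall>i. L2 T (\<phi> i)" shows "L2 T (\<lambda>t. \<Sum>i\<in>UNIV. c i * \<phi> i t)"
proof -
  have e: "(\<lambda>t. indicator T t * (\<Sum>i\<in>UNIV. c i * \<phi> i t)) =
        (\<lambda>t. \<Sum>i\<in>UNIV. c i * (indicator T t * \<phi> i t))"
    by (rule ext) (simp add: sum_distrib_left mult.left_commute)
  have "sqi lborel (\<lambda>t. \<Sum>i\<in>UNIV. c i * (indicator T t * \<phi> i t))"
    by (rule sqi_sum, simp, rule sqi_cmult) (use assms in \<open>simp add: L2_sqi\<close>)
  then show ?thesis unfolding L2_sqi e .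
qed

lemma ip_sum_left: fixes \<phi> :: "'m::finite \<Rightarrow> real \<Rightarrow> real"
  assumes "\<forall>j. set_integrable lborel T (\<lambda>t. \<phi> j t * f t)"
  shows "ipL2 T (\<lambda>t. \<Sum>j\<in>UNIV. r j * \<phi> j t) f = (\<Sum>j\<in>UNIV. r j * ipL2 T (\<phi> j) f)"
proof -
  have e: "(\<lambda>t. indicator T t *\<^sub>R ((\<Sum>j\<in>UNIV. r j * \<phi> j t) * f t)) =
        (\<lambda>t. \<Sum>j\<in>UNIV. r j * (indicator T t *\<^sub>R (\<phi> j t * f t)))"
    by (rule ext) (simp add: sum_distrib_left sum_distrib_right mult.left_commute mult.assoc)
  have "(\<integral>t. (\<Sum>j\<in>UNIV. r j * (indicator T t *\<^sub>R (\<phi> j t * f t))) \<partial>lborel) =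
        (\<Sum>j\<in>UNIV. (\<integral>t. r j * (indicator T t *\<^sub>R (\<phi> j t * f t)) \<partial>lborel))"
    by (rule Bochner_Integration.integral_sum, rule integrable_mult_right)
      (use assms in \<open>simp add: set_integrable_def\<close>)
  also have "\<dots> = (\<Sum>j\<in>UNIV. r j * ipL2 T (\<phi> j) f)"
    unfolding ipL2_def set_lebesgue_integral_def by (rule sum.cong[OF refl]) (rule integral_mult_right_zero)
  finally show ?thesis unfolding ipL2_def set_lebesgue_integral_def e .
qed

lemma ip_comm: "ipL2 T f g = ipL2 T g f"
  unfolding ipL2_def by (simp add: mult.commute)

lemma ip_cong: assumes "T \<in> sets lborel" "\<forall>t\<in>T. f t = f' t" "\<forall>t\<in>T. g t = g' t"
  shows "ipL2 T f g = ipL2 T f' g'"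
  unfolding ipL2_def by (rule set_lebesgue_integral_cong) (use assms in auto)

lemma ip_cong_AE: assumes "set_integrable lborel T (\<lambda>t. f t * g t)"
    "set_integrable lborel T (\<lambda>t. f' t * g t)" "AE t in lborel. t \<in> T \<longrightarrow> f t = f' t"
  shows "ipL2 T f g = ipL2 T f' g"
  unfolding ipL2_def set_lebesgue_integral_def
proof (rule integral_cong_AE)
  show "(\<lambda>t. indicator T t *\<^sub>R (f t * g t)) \<in> borel_measurable lborel"
    using assms(1) unfolding set_integrable_def by (rule borel_measurable_integrable)
  show "(\<lambda>t. indicator T t *\<^sub>R (f' t * g t)) \<in> borel_measurable lborel"
    using assms(2) unfolding set_integrable_def by (rule borel_measurable_integrable)
  show "AE t in lborel. indicator T t *\<^sub>R (f t * g t) = indicator T t *\<^sub>R (f' t * g t)"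
    using assms(3) by eventually_elim (simp add: indicator_def)
qed
context cor3 begin

definition Phi :: "(real \<Rightarrow> real) \<Rightarrow> real^'m" where
  "Phi f = (\<chi> j. ipL2 {lo..hi} (\<phi> j) f)"

definition G :: "real^'m^'m" where
  "G = (\<chi> i j. ipL2 {lo..hi} (\<phi> i) (\<phi> j))"

abbreviation lin :: "real^'m \<Rightarrow> real \<Rightarrow> real" where
  "lin c \<equiv> (\<lambda>t. \<Sum>i\<in>UNIV. c $ i * \<phi> i t)"

lemma G_sym: "transpose G = G"
  unfolding transpose_def G_def by (simp add: vec_eq_iff ip_comm)

lemma phi_prod: "L2 {lo..hi} f \<Longrightarrow> set_integrable lborel {lo..hi} (\<lambda>t. \<phi> j t * f t)"
  using L2_prod phi_L2 by blast

lemma L2_linc: "L2 {lo..hi} (lin c)"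
  using L2_lin[OF phi_L2] .

lemma ip_lin_left: "L2 {lo..hi} f \<Longrightarrow> ipL2 {lo..hi} (lin r) f = r \<bullet> Phi f"
  using ip_sum_left[where \<phi>=\<phi> and T="{lo..hi}" and f=f and r="\<lambda>j. r $ j"] phi_prod
  by (simp add: inner_vec_def Phi_def)

lemma Phi_lin: "Phi (lin c) = G *v c"
proof -
  have "Phi (lin c) $ i = (G *v c) $ i" for i
  proof -
    have "Phi (lin c) $ i = ipL2 {lo..hi} (lin c) (\<phi> i)"
      by (simp add: Phi_def ip_comm)
    also have "\<dots> = c \<bullet> Phi (\<phi> i)" using ip_lin_left phi_L2 by blast
    also have "\<dots> = (G *v c) $ i"
      by (simp add: inner_vec_def Phi_def matrix_vector_mult_def G_def ip_comm mult.commute)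
    finally show ?thesis .
  qed
  then show ?thesis by (simp add: vec_eq_iff)
qed

lemma ip_lin_lin: "ipL2 {lo..hi} (lin u) (lin v) = u \<bullet> (G *v v)"
  using ip_lin_left[OF L2_linc] Phi_lin by simp

lemma lin_phiv2: "lin c t = phiv t \<bullet> c"
  using lin_phiv by (simp add: inner_commute)

lemma lin_indep: assumes "AE t in lborel. t \<in> {lo..hi} \<longrightarrow> lin c t = 0" shows "c = 0"
proof -
  have "(\<lambda>i. c $ i) = (\<lambda>_. 0)" using phi_indep assms unfolding L2_lin_indep_def by blast
  then show "c = 0" by (metis vec_eq_iff zero_index)
qed

lemma G_pd: assumes "x \<noteq> 0" shows "x \<bullet> (G *v x) > 0"
proof -
  have si: "set_integrable lborel {lo..hi} (\<lambda>t. lin x t * lin x t)"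
    using L2_prod[OF L2_linc L2_linc] .
  have eq: "x \<bullet> (G *v x) = (\<integral>t. indicator {lo..hi} t *\<^sub>R (lin x t * lin x t) \<partial>lborel)"
    using ip_lin_lin[of x x] unfolding ipL2_def set_lebesgue_integral_def by simp
  have nn: "AE t in lborel. 0 \<le> indicator {lo..hi} t *\<^sub>R (lin x t * lin x t)"
    by (auto simp: indicator_def)
  have ge: "x \<bullet> (G *v x) \<ge> 0" unfolding eq
    by (rule integral_nonneg_AE[OF nn])
  show ?thesis
  proof (rule ccontr)
    assume "\<not> ?thesis"
    then have "x \<bullet> (G *v x) = 0" using ge by simp
    then have "AE t in lborel. indicator {lo..hi} t *\<^sub>R (lin x t * lin x t) = 0"
      using integral_nonneg_eq_0_iff_AE[OF si[unfolded set_integrable_def] nn] eq by simp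
    then have "AE t in lborel. t \<in> {lo..hi} \<longrightarrow> lin x t = 0"
      by eventually_elim (auto simp: indicator_def)
    then have "x = 0" by (rule lin_indep)
    then show False using assms by simp
  qed
qed

lemma G_inv: "G ** Ginv = mat 1 \<and> Ginv ** G = mat 1" if "Ginv = matrix_inv G"
proof -
  have "\<exists>B. B ** G = mat 1"
    unfolding matrix_left_invertible_ker using G_pd by (metis inner_zero_right less_irrefl)
  then obtain B where B: "B ** G = mat 1" by blast
  then have "G ** B = mat 1" using matrix_left_right_inverse by blast
  then have "\<exists>B. G ** B = mat 1 \<and> B ** G = mat 1" using B by blast
  then show ?thesis unfolding that matrix_inv_def by (rule someI_ex)
qed

lemma int_op_eq: assumes "s \<in> {lo..hi}" "L2 {lo..hi} f"
  shows "int_op {lo..hi} \<kappa> f s = phiv s \<bullet> (Sig *v Phi f)"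
proof -
  have "int_op {lo..hi} \<kappa> f s = ipL2 {lo..hi} (\<kappa> s) f"
    unfolding int_op_def ipL2_def by simp
  also have "\<dots> = ipL2 {lo..hi} (lin (phiv s v* Sig)) f"
  proof (rule ip_cong)
    have "lin (phiv s v* Sig) t = phiv s \<bullet> (Sig *v phiv t)" for t
      unfolding lin_phiv2 by (subst inner_commute) (rule dot_lmul_matrix)
    then show "\<forall>t\<in>{lo..hi}. \<kappa> s t = lin (phiv s v* Sig) t"
      using cov_eq[OF assms(1)] by simp
  qed auto
  also have "\<dots> = (phiv s v* Sig) \<bullet> Phi f" using ip_lin_left assms(2) by blast
  finally show ?thesis by (simp add: dot_lmul_matrix)
qed

lemma Sig_pd: assumes "x \<noteq> 0" shows "x \<bullet> (Sig *v x) > 0"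
proof -
  define c where "c = matrix_inv G *v x"
  have xc: "x = G *v c" unfolding c_def using G_inv
    by (simp add: matrix_vector_mul_assoc)
  have "c \<noteq> 0" using assms xc by auto
  then have "(\<lambda>i. c $ i) \<noteq> (\<lambda>_. 0)" by (metis vec_eq_iff zero_index)
  then have pos: "ipL2 {lo..hi} (lin c) (int_op {lo..hi} \<kappa> (lin c)) > 0"
    using kappa_pd by blast
  have "ipL2 {lo..hi} (lin c) (int_op {lo..hi} \<kappa> (lin c)) =
        ipL2 {lo..hi} (lin c) (lin (Sig *v (G *v c)))"
  proof (rule ip_cong)
    show "\<forall>t\<in>{lo..hi}. int_op {lo..hi} \<kappa> (lin c) t = lin (Sig *v (G *v c)) t"
      using int_op_eq L2_linc Phi_lin by (simp add: lin_phiv2)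
  qed auto
  also have "\<dots> = c \<bullet> (G *v (Sig *v (G *v c)))" by (rule ip_lin_lin)
  also have "\<dots> = x \<bullet> (Sig *v x)" using sym_dot[OF G_sym] xc by metis
  finally show ?thesis using pos by simp
qed

lemma Sig_inv: "Sig ** matrix_inv Sig = mat 1 \<and> matrix_inv Sig ** Sig = mat 1"
proof -
  have "\<exists>B. B ** Sig = mat 1"
    unfolding matrix_left_invertible_ker using Sig_pd by (metis inner_zero_right less_irrefl)
  then obtain B where B: "B ** Sig = mat 1" by blast
  then have "Sig ** B = mat 1" using matrix_left_right_inverse by blast
  then have "\<exists>B. Sig ** B = mat 1 \<and> B ** Sig = mat 1" using B by blast
  then show ?thesis unfolding matrix_inv_def by (rule someI_ex)
qed

end

context cor3 begin

lemma lin_scale: "lin (k *\<^sub>R c) t = k * lin c t"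
  unfolding lin_phiv2 by simp

lemma eig_cases: assumes "is_eigenpair {lo..hi} \<kappa> l f"
  shows "(l = 0 \<longrightarrow> Phi f = 0) \<and>
         (l \<noteq> 0 \<longrightarrow> (AE t in lborel. t \<in> {lo..hi} \<longrightarrow> f t = lin ((1/l) *\<^sub>R (Sig *v Phi f)) t))"
proof -
  have L: "L2 {lo..hi} f" and ae: "AE s in lborel. s \<in> {lo..hi} \<longrightarrow> int_op {lo..hi} \<kappa> f s = l * f s"
    using assms unfolding is_eigenpair_def by auto
  have io: "s \<in> {lo..hi} \<Longrightarrow> int_op {lo..hi} \<kappa> f s = lin (Sig *v Phi f) s" for s
    using int_op_eq[OF _ L] by (simp add: lin_phiv2)
  have ae2: "AE s in lborel. s \<in> {lo..hi} \<longrightarrow> lin (Sig *v Phi f) s = l * f s"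
    using ae io by auto
  show ?thesis
  proof (intro conjI impI)
    assume "l = 0"
    then have "AE s in lborel. s \<in> {lo..hi} \<longrightarrow> lin (Sig *v Phi f) s = 0"
      using ae2 by simp
    then have "Sig *v Phi f = 0" by (rule lin_indep)
    then have "matrix_inv Sig *v (Sig *v Phi f) = 0" by simp
    then show "Phi f = 0" using Sig_inv by (simp add: matrix_vector_mul_assoc)
  next
    assume l: "l \<noteq> 0"
    show "AE t in lborel. t \<in> {lo..hi} \<longrightarrow> f t = lin ((1/l) *\<^sub>R (Sig *v Phi f)) t"
      using ae2
    proof eventually_elim
      case (elim t)
      show ?case
      proof
        assume "t \<in> {lo..hi}"
        then have h: "lin (Sig *v Phi f) t = l * f t" using elim by blast
        have "lin ((1/l) *\<^sub>R (Sig *v Phi f)) t = (1/l) * lin (Sig *v Phi f) t" by (rule lin_scale)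
        then show "f t = lin ((1/l) *\<^sub>R (Sig *v Phi f)) t" using h l by simp
      qed
    qed
  qed
qed

lemma AE_lin_ip: assumes "L2 {lo..hi} f" "AE t in lborel. t \<in> {lo..hi} \<longrightarrow> f t = lin c t"
  "L2 {lo..hi} g" shows "ipL2 {lo..hi} f g = c \<bullet> Phi g"
proof -
  have "ipL2 {lo..hi} f g = ipL2 {lo..hi} (lin c) g"
    by (rule ip_cong_AE[OF L2_prod[OF assms(1,3)] L2_prod[OF L2_linc assms(3)] assms(2)])
  also have "\<dots> = c \<bullet> Phi g" by (rule ip_lin_left[OF assms(3)])
  finally show ?thesis .
qed

lemma AE_lin_Phi: assumes "L2 {lo..hi} f" "AE t in lborel. t \<in> {lo..hi} \<longrightarrow> f t = lin c t"
  shows "Phi f = G *v c"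
proof -
  have "Phi f $ j = Phi (lin c) $ j" for j
  proof -
    have "Phi f $ j = ipL2 {lo..hi} f (\<phi> j)" by (simp add: Phi_def ip_comm)
    also have "\<dots> = ipL2 {lo..hi} (lin c) (\<phi> j)"
      by (rule ip_cong_AE[OF L2_prod[OF assms(1) phi_L2[rule_format]]
            L2_prod[OF L2_linc phi_L2[rule_format]] assms(2)])
    also have "\<dots> = Phi (lin c) $ j" by (simp add: Phi_def ip_comm)
    finally show ?thesis .
  qed
  then show ?thesis using Phi_lin by (simp add: vec_eq_iff)
qed


lemma H_sym: "transpose (G ** Sig ** G) = G ** Sig ** G"
  by (simp add: matrix_transpose_mul G_sym Sig_sym matrix_mul_assoc)

lemma all_nonzero: fixes lam :: "'m \<Rightarrow> real" and xi :: "'m \<Rightarrow> real \<Rightarrow> real"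
  assumes top: "top_eigenpairs {lo..hi} \<kappa> lam xi" shows "lam k \<noteq> 0"
proof (rule ccontr)
  assume "\<not> lam k \<noteq> 0"
  then have k0: "lam k = 0" by simp
  have eig: "is_eigenpair {lo..hi} \<kappa> (lam i) (xi i)" for i using top unfolding top_eigenpairs_def by blast
  have L: "L2 {lo..hi} (xi i)" for i using eig unfolding is_eigenpair_def by blast
  define y where "y = (\<lambda>i. Phi (xi i))"
  define C where "C = (\<lambda>i. (1 / lam i) *\<^sub>R (Sig *v y i))"
  define P where "P = {i. lam i \<noteq> 0}"
  have y0: "i \<notin> P \<Longrightarrow> y i = 0" for i using eig_cases[OF eig, of i] unfolding P_def y_def by auto
  have SigC: "i \<in> P \<Longrightarrow> Sig *v y i = lam i *\<^sub>R C i" for i unfolding C_def P_def by simp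
  have AEi: "i \<in> P \<Longrightarrow> AE t in lborel. t \<in> {lo..hi} \<longrightarrow> xi i t = lin (C i) t" for i
    using eig_cases[OF eig, of i] unfolding P_def C_def y_def by auto
  have yC: "i \<in> P \<Longrightarrow> y i = G *v C i" for i unfolding y_def using AE_lin_Phi[OF L AEi] by simp
  define V where "V = {c. \<forall>j\<in>P. c \<bullet> y j = 0}"
  have subV: "subspace V" unfolding V_def subspace_def
    by (auto simp: inner_add_left)
  have "P \<noteq> UNIV" using k0 P_def by auto
  then have "P \<subset> UNIV" by auto
  then have cardP: "card P < CARD('m)" using psubset_card_mono[of "UNIV::'m set" P] by simp
  have "span (y ` P) \<noteq> UNIV"
  proof
    assume "span (y ` P) = UNIV"
    then have "dim (y ` P) = CARD('m)" using dim_eq_full[of "y ` P"] by simp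
    moreover have "dim (y ` P) \<le> card (y ` P)" by (rule dim_le_card') simp
    moreover have "card (y ` P) \<le> card P" by (rule card_image_le) simp
    ultimately show False using cardP by simp
  qed
  then obtain c0 where c0: "c0 \<noteq> 0" "\<forall>x\<in>span (y ` P). c0 \<bullet> x = 0"
    using span_not_UNIV_orthogonal by blast
  have "c0 \<in> V" unfolding V_def using c0(2) span_base by blast
  then have Vne: "\<exists>c\<in>V. c \<noteq> 0" using c0(1) by blast
  have inv: "\<forall>c\<in>V. (Sig ** G) *v c \<in> V"
  proof
    fix c assume c: "c \<in> V"
    have "((Sig ** G) *v c) \<bullet> y j = 0" if j: "j \<in> P" for j
    proof -
      have "((Sig ** G) *v c) \<bullet> y j = (Sig *v (G *v c)) \<bullet> y j" by (simp add: matrix_vector_mul_assoc)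
      also have "\<dots> = (G *v c) \<bullet> (Sig *v y j)" using sym_dot[OF Sig_sym, of "G *v c" "y j"] by simp
      also have "\<dots> = lam j * ((G *v c) \<bullet> C j)" using SigC[OF j] by simp
      also have "(G *v c) \<bullet> C j = c \<bullet> (G *v C j)" using sym_dot[OF G_sym, of c "C j"] by simp
      also have "\<dots> = 0" using c j yC[OF j] unfolding V_def by force
      finally show ?thesis by simp
    qed
    then show "(Sig ** G) *v c \<in> V" unfolding V_def by blast
  qed
  obtain c l where cV: "c \<in> V" and cnz: "c \<noteq> 0" and ceig: "(Sig ** G) *v c = l *\<^sub>R c"
  proof -
    have Gpd': "\<forall>x. x \<noteq> 0 \<longrightarrow> 0 < x \<bullet> (G *v x)" using G_pd by blast
    have GA: "G ** (Sig ** G) = G ** Sig ** G" by (simp add: matrix_mul_assoc)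
    show ?thesis using eig_exists[OF G_sym H_sym Gpd' GA subV Vne inv] that by blast
  qed
  have SGc: "Sig *v (G *v c) = l *\<^sub>R c" using ceig by (simp add: matrix_vector_mul_assoc)
  have Gc: "G *v c \<noteq> 0"
  proof
    assume "G *v c = 0"
    then have "matrix_inv G *v (G *v c) = 0" by simp
    then show False using G_inv[OF refl] cnz by (simp add: matrix_vector_mul_assoc)
  qed
  have lpos: "l > 0"
  proof -
    have "0 < (G *v c) \<bullet> (Sig *v (G *v c))" by (rule Sig_pd[OF Gc])
    also have "\<dots> = l * ((G *v c) \<bullet> c)" using SGc by simp
    also have "(G *v c) \<bullet> c = c \<bullet> (G *v c)" by (rule inner_commute)
    finally have "0 < l * (c \<bullet> (G *v c))" .
    moreover have "c \<bullet> (G *v c) > 0" by (rule G_pd[OF cnz])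
    ultimately show ?thesis by (simp add: zero_less_mult_iff)
  qed
  have eg: "is_eigenpair {lo..hi} \<kappa> l (lin c)"
    unfolding is_eigenpair_def
  proof (intro conjI)
    show "L2 {lo..hi} (lin c)" by (rule L2_linc)
    show "\<not> (AE t in lborel. t \<in> {lo..hi} \<longrightarrow> lin c t = 0)"
      using lin_indep cnz by blast
    have "int_op {lo..hi} \<kappa> (lin c) s = l * lin c s" if "s \<in> {lo..hi}" for s
    proof -
      have "int_op {lo..hi} \<kappa> (lin c) s = phiv s \<bullet> (Sig *v (G *v c))"
        using int_op_eq[OF that L2_linc] Phi_lin by simp
      also have "\<dots> = l * lin c s" using SGc by (simp add: lin_phiv2)
      finally show ?thesis .
    qed
    then show "AE s in lborel. s \<in> {lo..hi} \<longrightarrow> int_op {lo..hi} \<kappa> (lin c) s = l * lin c s"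
      by simp
  qed
  have orth: "\<forall>i. ipL2 {lo..hi} (lin c) (xi i) = 0"
  proof
    fix i
    have "ipL2 {lo..hi} (lin c) (xi i) = c \<bullet> y i" unfolding y_def by (rule ip_lin_left[OF L])
    then show "ipL2 {lo..hi} (lin c) (xi i) = 0" using cV y0 unfolding V_def by (cases "i \<in> P") auto
  qed
  have "l \<le> lam k" using top eg orth unfolding top_eigenpairs_def by blast
  then show False using k0 lpos by simp
qed

end

context cor3 begin

lemma fmd2_eq: fixes lam :: "'m \<Rightarrow> real" and xi :: "'m \<Rightarrow> real \<Rightarrow> real"
  assumes top: "top_eigenpairs {lo..hi} \<kappa> lam xi"
  shows "fmd2 {lo..hi} \<mu> lam xi (X w) = (a w - ma) \<bullet> (matrix_inv Sig *v (a w - ma))"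
proof -
  have eig: "is_eigenpair {lo..hi} \<kappa> (lam i) (xi i)" for i using top unfolding top_eigenpairs_def by blast
  have L: "L2 {lo..hi} (xi i)" for i using eig unfolding is_eigenpair_def by blast
  have nz: "lam i \<noteq> 0" for i by (rule all_nonzero[OF top])
  define y where "y = (\<lambda>i. Phi (xi i))"
  define C where "C = (\<lambda>i. (1 / lam i) *\<^sub>R (Sig *v y i))"
  have SigC: "Sig *v y i = lam i *\<^sub>R C i" for i unfolding C_def using nz[of i] by simp
  have AEi: "AE t in lborel. t \<in> {lo..hi} \<longrightarrow> xi i t = lin (C i) t" for i
    using eig_cases[OF eig, of i] nz[of i] unfolding C_def y_def by auto
  have orth: "C i \<bullet> y j = (if i = j then 1 else 0)" for i j
  proof -
    have "ipL2 {lo..hi} (xi i) (xi j) = C i \<bullet> y j"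
      unfolding y_def by (rule AE_lin_ip[OF L AEi L])
    then show ?thesis using top unfolding top_eigenpairs_def by metis
  qed
  define Cm :: "real^'m^'m" where "Cm = (\<chi> i. C i)"
  define Ym :: "real^'m^'m" where "Ym = (\<chi> k j. y j $ k)"
  have "(Cm ** Ym) $ i $ j = C i \<bullet> y j" for i j
    by (simp add: matrix_matrix_mult_def Cm_def Ym_def inner_vec_def)
  then have "Cm ** Ym = mat 1" using orth by (simp add: vec_eq_iff mat_def)
  then have YC: "Ym ** Cm = mat 1" using matrix_left_right_inverse by blast
  define d where "d = a w - ma"
  define z where "z = matrix_inv Sig *v d"
  have Sz: "Sig *v z = d" unfolding z_def using Sig_inv by (simp add: matrix_vector_mul_assoc)
  have zexp: "z = Ym *v (Cm *v z)" using YC by (simp add: matrix_vector_mul_assoc)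
  have dy: "d \<bullet> y j = lam j * (C j \<bullet> z)" for j
  proof -
    have "d \<bullet> y j = (Sig *v z) \<bullet> y j" using Sz by simp
    also have "\<dots> = z \<bullet> (Sig *v y j)" using sym_dot[OF Sig_sym, of z "y j"] by simp
    also have "\<dots> = lam j * (C j \<bullet> z)" using SigC by (simp add: inner_commute)
    finally show ?thesis .
  qed
  have "d \<bullet> z = d \<bullet> (Ym *v (Cm *v z))" using zexp by simp
  also have "\<dots> = (d v* Ym) \<bullet> (Cm *v z)" by (simp add: dot_lmul_matrix)
  also have "\<dots> = (\<Sum>j\<in>UNIV. (d \<bullet> y j) * (C j \<bullet> z))"
    by (simp add: inner_vec_def vector_matrix_mult_def matrix_vector_mult_def Ym_def Cm_def)
  also have "\<dots> = (\<Sum>j\<in>UNIV. inverse (lam j) * (d \<bullet> y j)\<^sup>2)"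
  proof (rule sum.cong[OF refl])
    fix j
    have "C j \<bullet> z = inverse (lam j) * (d \<bullet> y j)" using dy[of j] nz[of j] by (simp add: field_simps)
    then show "(d \<bullet> y j) * (C j \<bullet> z) = inverse (lam j) * (d \<bullet> y j)\<^sup>2"
      by (simp add: power2_eq_square)
  qed
  also have "\<dots> = fmd2 {lo..hi} \<mu> lam xi (X w)"
    unfolding fmd2_def
  proof (rule sum.cong[OF refl])
    fix j
    have "ipL2 {lo..hi} (\<lambda>t. X w t - \<mu> t) (xi j) = ipL2 {lo..hi} (lin d) (xi j)"
    proof (rule ip_cong)
      show "\<forall>t\<in>{lo..hi}. X w t - \<mu> t = lin d t"
      proof
        fix t assume t: "t \<in> {lo..hi}"
        have "lin d t = phiv t \<bullet> d" by (rule lin_phiv2)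
        also have "\<dots> = phiv t \<bullet> a w - phiv t \<bullet> ma" unfolding d_def by (rule inner_diff_right)
        also have "phiv t \<bullet> ma = \<mu> t" using mean_eq[OF t] by (simp add: inner_commute)
        finally show "X w t - \<mu> t = lin d t" by (simp add: X_eq2)
      qed
    qed auto
    also have "\<dots> = d \<bullet> y j" unfolding y_def by (rule ip_lin_left[OF L])
    finally show "inverse (lam j) * (d \<bullet> y j)\<^sup>2 =
        inverse (lam j) * (ipL2 {lo..hi} (\<lambda>t. X w t - \<mu> t) (xi j))\<^sup>2" by simp
  qed
  finally show ?thesis unfolding d_def z_def by simp
qed

end

context cor3 begin

lemma gauss: assumes gp: "gaussian_process M {lo..hi} X" shows "mv_normal M a ma Sig"
  unfolding mv_normal_def
proof
  fix c :: "real^'m"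
  define Y where "Y = (\<lambda>w. c \<bullet> a w)"
  from repr[of c] obtain U u where U: "finite U" "U \<subseteq> {lo..hi}"
    and U3: "\<forall>w. c \<bullet> a w = (\<Sum>t\<in>U. u t * X w t)" by blast
  have YU: "Y = (\<lambda>w. \<Sum>t\<in>U. u t * X w t)" unfolding Y_def using U3 by (intro ext) blast
  obtain mu v where nr: "normal_rv M Y mu v"
    using gp U unfolding gaussian_process_def YU by blast
  have EY: "(\<integral>w. Y w \<partial>M) = c \<bullet> ma" unfolding Y_def by (rule exp_lin)
  have VY: "(\<integral>w. (Y w - c \<bullet> ma)\<^sup>2 \<partial>M) = c \<bullet> (Sig *v c)"
  proof -
    have "(\<lambda>w. (Y w - c \<bullet> ma)\<^sup>2) = (\<lambda>w. (c \<bullet> (a w - ma)) * (c \<bullet> (a w - ma)))"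
      unfolding Y_def by (simp add: inner_diff_right power2_eq_square)
    then show ?thesis using exp_bilin[of c c] by simp
  qed
  have Ymeas: "Y \<in> borel_measurable M" unfolding Y_def by (rule lin_meas)
  show "normal_rv M (\<lambda>w. c \<bullet> a w) (c \<bullet> ma) (c \<bullet> (Sig *v c))"
  proof (cases "v = 0")
    case True
    then have ae: "AE w in M. Y w = mu" using nr unfolding normal_rv_def by auto
    have "(\<integral>w. Y w \<partial>M) = (\<integral>w. mu \<partial>M)" by (rule integral_cong_AE[OF Ymeas _ ae]) simp
    then have mu: "mu = c \<bullet> ma" using EY prob_space by simp
    have "(\<integral>w. (Y w - c \<bullet> ma)\<^sup>2 \<partial>M) = (\<integral>w. 0 \<partial>M)"
      by (rule integral_cong_AE) (use Ymeas ae mu in auto)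
    then have "c \<bullet> (Sig *v c) = 0" using VY by simp
    then show ?thesis unfolding normal_rv_def using Ymeas ae mu by (simp add: Y_def)
  next
    case False
    then have vpos: "v > 0" and dist: "distributed M lborel Y (normal_density mu (sqrt v))"
      using nr unfolding normal_rv_def by auto
    have s: "0 < sqrt v" using vpos by simp
    have "(\<integral>w. Y w \<partial>M) = mu"
      by (rule normal_distributed_expectation[OF s dist])
    then have mu: "mu = c \<bullet> ma" using EY by simp
    have "(\<integral>w. (Y w - (\<integral>w. Y w \<partial>M))\<^sup>2 \<partial>M) = (sqrt v)\<^sup>2"
      by (rule normal_distributed_variance[OF s dist])
    then have "c \<bullet> (Sig *v c) = v" using VY EY vpos by simp
    then show ?thesis unfolding normal_rv_def using vpos dist mu by (simp add: Y_def)
  qed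
qed

end

theorem corollary3:
  fixes M :: "'w measure" and lo hi :: real
    and \<phi> :: "'m::finite \<Rightarrow> real \<Rightarrow> real"
    and a :: "'w \<Rightarrow> real^'m"
    and X :: "'w \<Rightarrow> real \<Rightarrow> real"
    and \<mu> :: "real \<Rightarrow> real" and \<kappa> :: "real \<Rightarrow> real \<Rightarrow> real"
  assumes "prob_space M"
    and "lo < hi"
    and phi_L2: "\<forall>i. L2 {lo..hi} (\<phi> i)"
    and phi_indep: "L2_lin_indep {lo..hi} \<phi>"
    and a_meas: "a \<in> borel_measurable M"
    and X_def: "\<forall>w t. X w t = (\<Sum>i\<in>UNIV. a w $ i * \<phi> i t)"
    and X_sq: "\<forall>t\<in>{lo..hi}. integrable M (\<lambda>w. (X w t)\<^sup>2)"
    and mean: "\<forall>t\<in>{lo..hi}. \<mu> t = (\<integral>w. X w t \<partial>M)"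
    and cov: "\<forall>s\<in>{lo..hi}. \<forall>t\<in>{lo..hi}.
                \<kappa> s t = (\<integral>w. (X w s - \<mu> s) * (X w t - \<mu> t) \<partial>M)"
    and kappa_pd: "\<forall>c :: 'm \<Rightarrow> real. c \<noteq> (\<lambda>_. 0) \<longrightarrow>
                ipL2 {lo..hi} (\<lambda>s. \<Sum>i\<in>UNIV. c i * \<phi> i s)
                  (int_op {lo..hi} \<kappa> (\<lambda>t. \<Sum>i\<in>UNIV. c i * \<phi> i t)) > 0"
  shows "\<exists>(ma :: real^'m) (\<Sigma> :: real^'m^'m).
      (\<forall>i. integrable M (\<lambda>w. (a w $ i)\<^sup>2)) \<and>
      (\<forall>i. ma $ i = (\<integral>w. a w $ i \<partial>M)) \<and>
      (\<forall>i j. \<Sigma> $ i $ j = (\<integral>w. (a w $ i - ma $ i) * (a w $ j - ma $ j) \<partial>M)) \<and>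
      transpose \<Sigma> = \<Sigma> \<and>
      (\<forall>x. x \<noteq> 0 \<longrightarrow> x \<bullet> (\<Sigma> *v x) > 0) \<and>
      (\<forall>t\<in>{lo..hi}. ma \<bullet> (\<chi> i. \<phi> i t) = \<mu> t) \<and>
      (\<forall>s\<in>{lo..hi}. \<forall>t\<in>{lo..hi}. (\<chi> i. \<phi> i s) \<bullet> (\<Sigma> *v (\<chi> i. \<phi> i t)) = \<kappa> s t) \<and>
      (\<forall>(lam :: 'm \<Rightarrow> real) xi. top_eigenpairs {lo..hi} \<kappa> lam xi \<longrightarrow>
         (\<forall>w\<in>space M. fmd2 {lo..hi} \<mu> lam xi (X w) =
            (a w - ma) \<bullet> (matrix_inv \<Sigma> *v (a w - ma)))) \<and>
      (gaussian_process M {lo..hi} X \<longrightarrow> mv_normal M a ma \<Sigma>)"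
  proof -
  have "cor3 M lo hi \<phi> a X \<mu> \<kappa>"
    unfolding cor3_def cor3_axioms_def using assms by auto
  then interpret c3: cor3 M lo hi \<phi> a X \<mu> \<kappa> .
  show ?thesis
  proof (intro exI[of _ c3.ma] exI[of _ c3.Sig] conjI)
    show "\<forall>i. integrable M (\<lambda>w. (a w $ i)\<^sup>2)" using c3.sqi_comp unfolding sqi_def by blast
    show "\<forall>i. c3.ma $ i = (\<integral>w. a w $ i \<partial>M)" by (simp add: c3.ma_def)
    show "\<forall>i j. c3.Sig $ i $ j = (\<integral>w. (a w $ i - c3.ma $ i) * (a w $ j - c3.ma $ j) \<partial>M)"
      by (simp add: c3.Sig_def)
    show "transpose c3.Sig = c3.Sig" by (rule c3.Sig_sym)
    show "\<forall>x. x \<noteq> 0 \<longrightarrow> x \<bullet> (c3.Sig *v x) > 0" using c3.Sig_pd by blast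
    show "\<forall>t\<in>{lo..hi}. c3.ma \<bullet> (\<chi> i. \<phi> i t) = \<mu> t"
      using c3.mean_eq unfolding c3.phiv_def by blast
    show "\<forall>s\<in>{lo..hi}. \<forall>t\<in>{lo..hi}. (\<chi> i. \<phi> i s) \<bullet> (c3.Sig *v (\<chi> i. \<phi> i t)) = \<kappa> s t"
      using c3.cov_eq unfolding c3.phiv_def by blast
    show "\<forall>(lam :: 'm \<Rightarrow> real) xi. top_eigenpairs {lo..hi} \<kappa> lam xi \<longrightarrow>
         (\<forall>w\<in>space M. fmd2 {lo..hi} \<mu> lam xi (X w) =
            (a w - c3.ma) \<bullet> (matrix_inv c3.Sig *v (a w - c3.ma)))"
      using c3.fmd2_eq by blast
    show "gaussian_process M {lo..hi} X \<longrightarrow> mv_normal M a c3.ma c3.Sig"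
      using c3.gauss by blast
  qed
qed

end
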